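(* Let $F$ be a field and let $G$ be a bipartite graph with bipartition $(X,Y)$, where $|X|=m$, $|Y|=n$ and $m\le n$. Suppose $\mathcal{R}_F(G)\neq\emptyset$, and let $H$ be the subgraph obtained from $G$ by deleting $k$ vertices of $X$. Then $$f(H\Box K_2)=m-k.$$
   Context: All graphs are finite and simple. For a graph $H$ with a perfect matching $M$, a subset $S\subseteq M$ is a forcing set of $M$ if $S$ is contained in no other perfect matching of $H$; $f(H,M)$ is the minimum size of a forcing set of $M$, and $f(H)$ is the minimum of $f(H,M)$ over all perfect matchings $M$ of $H$. For a bipartite graph $G$ with bipartition $(X,Y)$, a weighted bi-adjacency matrix of $G$ over $F$ is an $|X|\times|Y|$ matrix over $F$, rows indexed by $X$ and columns by $Y$, whose $(x,y)$ entry is nonzero iff $x$ and $y$ are adjacent. $\mathcal{R}_F(G)$ denotes the set of weighted bi-adjacency matrices $B$ of $G$ over $F$ for which there is another weighted bi-adjacency matrix $C$ of $G$ over $F$ (same row/column indexing) with $BC^{\top}=I_{|X|}$. $K_2$ is the complete graph on two vertices, and $G\Box H$ is the Cartesian product: vertex set $V(G)\times V(H)$, with $(g_1,h_1)\sim(g_2,h_2)$ iff either $g_1=g_2$ and $h_1h_2\in E(H)$, or $h_1=h_2$ and $g_1g_2\in E(G)$. *)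

theory Defs
  imports Main
begin

type_synonym 'v graph = "'v set \<times> 'v set set"

definition simple_graph :: "'v graph \<Rightarrow> bool" where
  "simple_graph G \<longleftrightarrow> finite (fst G) \<and> (\<forall>e\<in>snd G. e \<subseteq> fst G \<and> card e = 2)"

definition perfect_matching :: "'v graph \<Rightarrow> 'v set set \<Rightarrow> bool" where
  "perfect_matching G M \<longleftrightarrow> M \<subseteq> snd G \<and> (\<forall>v\<in>fst G. \<exists>!e. e \<in> M \<and> v \<in> e)"

definition forcing_set :: "'v graph \<Rightarrow> 'v set set \<Rightarrow> 'v set set \<Rightarrow> bool" where
  "forcing_set G M S \<longleftrightarrow> S \<subseteq> M \<and>
     (\<forall>M'. perfect_matching G M' \<and> S \<subseteq> M' \<longrightarrow> M' = M)"

definition forcing_number_pm :: "'v graph \<Rightarrow> 'v set set \<Rightarrow> nat" where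
  "forcing_number_pm G M = (LEAST s. \<exists>S. forcing_set G M S \<and> card S = s)"

definition forcing_number :: "'v graph \<Rightarrow> nat" where
  "forcing_number G = (LEAST s. \<exists>M. perfect_matching G M \<and> forcing_number_pm G M = s)"

definition bipartition :: "'v graph \<Rightarrow> 'v set \<Rightarrow> 'v set \<Rightarrow> bool" where
  "bipartition G X Y \<longleftrightarrow> X \<inter> Y = {} \<and> X \<union> Y = fst G \<and>
     (\<forall>e\<in>snd G. \<exists>x\<in>X. \<exists>y\<in>Y. e = {x, y})"

text \<open>Weighted bi-adjacency matrix of G w.r.t. (X,Y): an X-by-Y matrix, represented as a
  function that is zero outside X \<times> Y, whose (x,y) entry is nonzero iff xy is an edge.\<close>
definition weighted_biadj :: "'v graph \<Rightarrow> 'v set \<Rightarrow> 'v set \<Rightarrow> ('v \<Rightarrow> 'v \<Rightarrow> 'f::field) \<Rightarrow> bool" where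
  "weighted_biadj G X Y B \<longleftrightarrow>
     (\<forall>x y. (x \<notin> X \<or> y \<notin> Y) \<longrightarrow> B x y = 0) \<and>
     (\<forall>x\<in>X. \<forall>y\<in>Y. B x y \<noteq> 0 \<longleftrightarrow> {x, y} \<in> snd G)"

definition R_F :: "'v graph \<Rightarrow> 'v set \<Rightarrow> 'v set \<Rightarrow> ('v \<Rightarrow> 'v \<Rightarrow> 'f::field) set" where
  "R_F G X Y = {B. weighted_biadj G X Y B \<and>
     (\<exists>C. weighted_biadj G X Y C \<and>
        (\<forall>x\<in>X. \<forall>x'\<in>X. (\<Sum>y\<in>Y. B x y * C x' y) = (if x = x' then 1 else 0)))}"

definition delete_vertices :: "'v graph \<Rightarrow> 'v set \<Rightarrow> 'v graph" where
  "delete_vertices G D = (fst G - D, {e \<in> snd G. e \<inter> D = {}})"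

definition K2 :: "bool graph" where
  "K2 = (UNIV, {{False, True}})"

definition box_product :: "'a graph \<Rightarrow> 'b graph \<Rightarrow> ('a \<times> 'b) graph" where
  "box_product G H = (fst G \<times> fst H,
     {{(g1, h1), (g2, h2)} | g1 h1 g2 h2.
        (g1 = g2 \<and> g1 \<in> fst G \<and> {h1, h2} \<in> snd H) \<or>
        (h1 = h2 \<and> h1 \<in> fst H \<and> {g1, g2} \<in> snd G)})"

end

theory Submission
  imports Defs
begin


lemma fix_sub:
  assumes "finite P" "P \<noteq> {}" "f ` P \<subseteq> P"
  shows "\<exists>Q\<subseteq>P. Q \<noteq> {} \<and> f ` Q = Q"
  using assms
proof (induction P rule: finite_psubset_induct)
  case (psubset P)
  note pr = psubset.prems
  show ?case
  proof (cases "f ` P = P")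
    case True then show ?thesis using pr by blast
  next
    case False
    then have 1: "f ` P \<subset> P" using pr(2) by blast
    have 2: "f ` P \<noteq> {}" using pr(1) by blast
    have 3: "f ` (f ` P) \<subseteq> f ` P" using pr(2) by blast
    have "\<exists>Q\<subseteq>f ` P. Q \<noteq> {} \<and> f ` Q = Q" using psubset.IH[OF 1 2 3] .
    then obtain Q where Q: "Q \<subseteq> f ` P" "Q \<noteq> {}" "f ` Q = Q" by blast
    have "Q \<subseteq> P" using Q(1) 1 by (meson psubset_imp_subset subset_trans)
    then show ?thesis using Q(2,3) by (intro exI[of _ Q]) simp
  qed
qed

lemma alt_matching:
  fixes \<Gamma> :: "'a graph" and W :: "'a \<Rightarrow> 'a \<Rightarrow> 'f::field" and v :: "'a \<Rightarrow> 'f"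
  assumes pm: "perfect_matching \<Gamma> M"
    and disj: "R \<inter> Cc = {}" and finC: "finite Cc"
    and RV: "R \<subseteq> fst \<Gamma>" and CV: "Cc \<subseteq> fst \<Gamma>"
    and part: "\<forall>b\<in>Cc. \<exists>a\<in>R. {a,b} \<in> M"
    and Wedge: "\<forall>a\<in>R. \<forall>b\<in>Cc. W a b \<noteq> 0 \<longleftrightarrow> {a,b} \<in> snd \<Gamma>"
    and ker: "\<forall>a\<in>R. (\<Sum>b\<in>Cc. W a b * v b) = 0"
    and nz: "\<exists>b\<in>Cc. v b \<noteq> 0"
    and SM: "S \<subseteq> M" and Sdisj: "\<forall>e\<in>S. e \<inter> R = {}"
  shows "\<exists>M'. perfect_matching \<Gamma> M' \<and> S \<subseteq> M' \<and> M' \<noteq> M"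
proof -
  have ME: "M \<subseteq> snd \<Gamma>" and Mu: "\<forall>u\<in>fst \<Gamma>. \<exists>!e. e \<in> M \<and> u \<in> e"
    using pm unfolding perfect_matching_def by auto
  have RC: "x \<notin> Cc" if "x \<in> R" for x using disj that by auto
  have uq: "e = e'" if "u \<in> fst \<Gamma>" "e \<in> M" "u \<in> e" "e' \<in> M" "u \<in> e'" for u e e'
    using Mu that by metis
  define \<mu> where "\<mu> b = (SOME a. a \<in> R \<and> {a,b} \<in> M)" for b
  have mu: "\<mu> b \<in> R \<and> {\<mu> b, b} \<in> M" if "b \<in> Cc" for b
    using part that unfolding \<mu>_def by (metis (mono_tags, lifting) someI_ex)
  have Medge1: "e = {\<mu> b, b}" if "b \<in> Cc" "e \<in> M" "\<mu> b \<in> e" for b e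
    using mu[OF that(1)] that Mu RV by blast
  have Medge2: "e = {\<mu> b, b}" if "b \<in> Cc" "e \<in> M" "b \<in> e" for b e
    using mu[OF that(1)] that Mu CV by blast
  have muinj: "b = b'" if "b \<in> Cc" "b' \<in> Cc" "\<mu> b = \<mu> b'" for b b'
  proof -
    have "{\<mu> b', b'} = {\<mu> b, b}" using Medge1[OF that(1), of "{\<mu> b', b'}"] mu[OF that(2)] that(3) by auto
    moreover have "b' \<noteq> \<mu> b" using mu[OF that(1)] that(2) disj by auto
    ultimately show ?thesis by (auto simp: doubleton_eq_iff)
  qed
  define P where "P = {b\<in>Cc. v b \<noteq> 0}"
  have sig: "\<exists>b'\<in>P. b' \<noteq> b \<and> W (\<mu> b) b' \<noteq> 0" if "b \<in> P" for b
  proof -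
    have bC: "b \<in> Cc" and vb: "v b \<noteq> 0" using that unfolding P_def by auto
    have "W (\<mu> b) b \<noteq> 0" using Wedge mu[OF bC] ME bC by auto
    then have t: "W (\<mu> b) b * v b \<noteq> 0" using vb by simp
    have "(\<Sum>b'\<in>Cc. W (\<mu> b) b' * v b') = W (\<mu> b) b * v b + (\<Sum>b'\<in>Cc - {b}. W (\<mu> b) b' * v b')"
      using bC finC by (simp add: sum.remove)
    then have "(\<Sum>b'\<in>Cc - {b}. W (\<mu> b) b' * v b') \<noteq> 0" using ker mu[OF bC] t by auto
    then obtain b' where "b' \<in> Cc - {b}" "W (\<mu> b) b' * v b' \<noteq> 0"
      by (meson sum.neutral)
    then show ?thesis unfolding P_def by auto
  qed
  have "\<forall>b\<in>P. \<exists>b'. b' \<in> P \<and> b' \<noteq> b \<and> W (\<mu> b) b' \<noteq> 0" using sig by blast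
  from bchoice[OF this] obtain \<sigma> where sg: "\<forall>b\<in>P. \<sigma> b \<in> P \<and> \<sigma> b \<noteq> b \<and> W (\<mu> b) (\<sigma> b) \<noteq> 0"
    by blast
  have "finite P" "P \<noteq> {}" "\<sigma> ` P \<subseteq> P" using finC nz sg unfolding P_def by auto
  from fix_sub[OF this] obtain Q where Q: "Q \<subseteq> P" "Q \<noteq> {}" "\<sigma> ` Q = Q" by blast
  have sQ: "\<sigma> b \<in> Q" if "b \<in> Q" for b using Q(3) that by (metis imageI)
  have QC: "Q \<subseteq> Cc" using Q unfolding P_def by auto
  have finQ: "finite Q" using QC finC finite_subset by auto
  have sinj: "inj_on \<sigma> Q" using Q(3) finQ by (simp add: eq_card_imp_inj_on)
  define M' where "M' = {e\<in>M. e \<inter> \<mu> ` Q = {}} \<union> (\<lambda>b. {\<mu> b, \<sigma> b}) ` Q"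
  have newE: "{\<mu> b, \<sigma> b} \<in> snd \<Gamma>" if "b \<in> Q" for b
  proof -
    have "\<sigma> b \<in> Cc" using sQ that QC by auto
    have "b \<in> Cc" "b \<in> P" using that QC Q(1) by auto
    then have "\<mu> b \<in> R" "W (\<mu> b) (\<sigma> b) \<noteq> 0" using mu sg by auto
    then show ?thesis using Wedge \<open>\<sigma> b \<in> Cc\<close> by blast
  qed
  have M'E: "M' \<subseteq> snd \<Gamma>" unfolding M'_def using ME newE by auto
  have uniq: "\<exists>!e. e \<in> M' \<and> u \<in> e" if u: "u \<in> fst \<Gamma>" for u
  proof (cases "u \<in> \<mu> ` Q")
    case True
    then obtain b where b: "b \<in> Q" "u = \<mu> b" by auto
    have "{\<mu> b, \<sigma> b} \<in> M'" using b unfolding M'_def by auto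
    moreover have "e = {\<mu> b, \<sigma> b}" if "e \<in> M'" "u \<in> e" for e
    proof -
      have "e \<notin> {e\<in>M. e \<inter> \<mu> ` Q = {}}" using b that by auto
      then have "e \<in> (\<lambda>b. {\<mu> b, \<sigma> b}) ` Q" using that(1) unfolding M'_def by blast
      then obtain b' where b': "b' \<in> Q" "e = {\<mu> b', \<sigma> b'}" by blast
      have "\<sigma> b' \<in> Cc" using sQ b' QC by auto
      moreover have "\<mu> b \<in> R" using mu QC b(1) by blast
      ultimately have "\<mu> b \<noteq> \<sigma> b'" using RC by metis
      then have "\<mu> b = \<mu> b'" using that b b' by auto
      then have "b = b'" using muinj QC b b' by auto
      then show ?thesis using b' by simp
    qed
    ultimately show ?thesis using b by auto
  next
    case False
    note uQ = False
    show ?thesis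
    proof (cases "u \<in> Q")
      case True
      then obtain b where b: "b \<in> Q" "u = \<sigma> b" using Q(3) by (metis imageE)
      have "{\<mu> b, \<sigma> b} \<in> M'" using b unfolding M'_def by auto
      moreover have "e = {\<mu> b, \<sigma> b}" if "e \<in> M'" "u \<in> e" for e
      proof (cases "e \<in> M \<and> e \<inter> \<mu> ` Q = {}")
        case True
        then have "e = {\<mu> u, u}" using Medge2[of u e] that \<open>u \<in> Q\<close> QC by auto
        then show ?thesis using True \<open>u \<in> Q\<close> by auto
      next
        case False
        then have "e \<in> (\<lambda>b. {\<mu> b, \<sigma> b}) ` Q" using that(1) unfolding M'_def by blast
      then obtain b' where b': "b' \<in> Q" "e = {\<mu> b', \<sigma> b'}" by blast
        have "u \<noteq> \<mu> b'" using uQ b' by auto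
        then have "\<sigma> b = \<sigma> b'" using that b b' by auto
        then have "b = b'" using sinj b b' by (meson inj_onD)
        then show ?thesis using b' by simp
      qed
      ultimately show ?thesis using b by auto
    next
      case False
      have "\<exists>!e. e \<in> M \<and> u \<in> e" using Mu u by blast
      then obtain e where e: "e \<in> M" "u \<in> e" by blast
      have eQ: "e \<inter> \<mu> ` Q = {}"
      proof (rule ccontr)
        assume "e \<inter> \<mu> ` Q \<noteq> {}"
        then obtain b where b: "b \<in> Q" "\<mu> b \<in> e" by auto
        then have "b \<in> Cc" using QC by blast
        then have "e = {\<mu> b, b}" using Medge1[of b e] e(1) b(2) by blast
        then have "u = \<mu> b \<or> u = b" using e(2) by blast
        then show False using uQ False b(1) by blast
      qed
      have "e \<in> M'" using e eQ unfolding M'_def by blast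
      moreover have "e' = e" if "e' \<in> M'" "u \<in> e'" for e'
      proof -
        have "e' \<in> M"
        proof (rule ccontr)
          assume "e' \<notin> M"
          then have "e' \<in> (\<lambda>b. {\<mu> b, \<sigma> b}) ` Q" using that(1) unfolding M'_def by blast
          then obtain b where b: "b \<in> Q" "e' = {\<mu> b, \<sigma> b}" by blast
          then have "u = \<mu> b \<or> u = \<sigma> b" using that(2) by blast
          moreover have "\<sigma> b \<in> Q" using sQ b(1) by blast
          ultimately show False using uQ False b(1) by blast
        qed
        then show ?thesis using uq[OF u] e that by blast
      qed
      ultimately show ?thesis using e(2) by blast
    qed
  qed
  have "perfect_matching \<Gamma> M'" unfolding perfect_matching_def using M'E uniq by blast
  moreover have muQ: "\<mu> ` Q \<subseteq> R" using mu QC by blast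
  have "S \<subseteq> M'"
  proof
    fix e assume "e \<in> S"
    then have "e \<in> M" "e \<inter> \<mu> ` Q = {}" using SM Sdisj muQ by blast+
    then show "e \<in> M'" unfolding M'_def by blast
  qed
  moreover have "M' \<noteq> M"
  proof
    assume eq: "M' = M"
    obtain b where b: "b \<in> Q" using Q by blast
    have bC: "b \<in> Cc" using b QC by blast
    have "{\<mu> b, \<sigma> b} \<in> M" using b eq unfolding M'_def by blast
    then have "{\<mu> b, \<sigma> b} = {\<mu> b, b}" using Medge1[of b] bC by blast
    moreover have "\<sigma> b \<in> Cc" using sQ b QC by blast
    moreover have "\<sigma> b \<noteq> b" using sg Q(1) b by blast
    moreover have "\<mu> b \<in> R" using mu bC by blast
    ultimately show False using RC by (metis doubleton_eq_iff)
  qed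
  ultimately show ?thesis by blast
qed


lemma lin_solve:
  fixes a :: "'j \<Rightarrow> 'i \<Rightarrow> 'f::field"
  assumes "finite J" "finite I" "card J < card I"
  shows "\<exists>w. (\<exists>i\<in>I. w i \<noteq> 0) \<and> (\<forall>j\<in>J. (\<Sum>i\<in>I. a j i * w i) = 0)"
  using assms
proof (induction J arbitrary: I a rule: finite_induct)
  case empty
  then have "I \<noteq> {}" by auto
  then show ?case by (intro exI[of _ "\<lambda>_. 1"]) auto
next
  case (insert j0 J0)
  show ?case
  proof (cases "\<forall>i\<in>I. a j0 i = 0")
    case True
    have "card J0 < card I" using insert.prems insert.hyps by simp
    with insert.IH[of I a] insert.prems obtain w where
      "\<exists>i\<in>I. w i \<noteq> 0" "\<forall>j\<in>J0. (\<Sum>i\<in>I. a j i * w i) = 0" by auto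
    then show ?thesis using True by (intro exI[of _ w]) auto
  next
    case False
    then obtain i0 where i0: "i0 \<in> I" "a j0 i0 \<noteq> 0" by auto
    define I' where "I' = I - {i0}"
    define a' where "a' = (\<lambda>j i. a j i - a j i0 / a j0 i0 * a j0 i)"
    have "card I' = card I - 1" using i0 insert.prems unfolding I'_def by auto
    then have "card J0 < card I'" using insert.prems insert.hyps by auto
    moreover have "finite I'" using insert.prems unfolding I'_def by auto
    ultimately have "\<exists>w. (\<exists>i\<in>I'. w i \<noteq> 0) \<and> (\<forall>j\<in>J0. (\<Sum>i\<in>I'. a' j i * w i) = 0)"
      using insert.IH[of I' a'] by simp
    then obtain w' where w': "\<exists>i\<in>I'. w' i \<noteq> 0" "\<forall>j\<in>J0. (\<Sum>i\<in>I'. a' j i * w' i) = 0"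
      by blast
    define c where "c = - (\<Sum>i\<in>I'. a j0 i * w' i) / a j0 i0"
    define w where "w = w'(i0 := c)"
    have sumI: "(\<Sum>i\<in>I. a j i * w i) = a j i0 * c + (\<Sum>i\<in>I'. a j i * w' i)" for j
    proof -
      have "(\<Sum>i\<in>I. a j i * w i) = a j i0 * w i0 + (\<Sum>i\<in>I'. a j i * w i)"
        unfolding I'_def using sum.remove[OF _ i0(1)] insert.prems by blast
      also have "(\<Sum>i\<in>I'. a j i * w i) = (\<Sum>i\<in>I'. a j i * w' i)"
        unfolding w_def I'_def by (intro sum.cong) auto
      finally show ?thesis unfolding w_def by simp
    qed
    have "\<forall>j\<in>insert j0 J0. (\<Sum>i\<in>I. a j i * w i) = 0"
    proof
      fix j assume j: "j \<in> insert j0 J0"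
      show "(\<Sum>i\<in>I. a j i * w i) = 0"
      proof (cases "j = j0")
        case True
        have "a j0 i0 * c = - (\<Sum>i\<in>I'. a j0 i * w' i)" unfolding c_def using i0 by simp
        then show ?thesis using sumI[of j0] True by simp
      next
        case False
        then have "j \<in> J0" using j by auto
        then have "(\<Sum>i\<in>I'. a' j i * w' i) = 0" using w' by auto
        moreover have "(\<Sum>i\<in>I'. a' j i * w' i) = (\<Sum>i\<in>I'. a j i * w' i) - a j i0 / a j0 i0 * (\<Sum>i\<in>I'. a j0 i * w' i)"
          unfolding a'_def by (simp add: left_diff_distrib sum_subtractf sum_distrib_left mult.assoc)
        moreover have "a j i0 * c = - (a j i0 / a j0 i0 * (\<Sum>i\<in>I'. a j0 i * w' i))" unfolding c_def by simp
        ultimately show ?thesis using sumI[of j] by simp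
      qed
    qed
    moreover have "\<exists>i\<in>I. w i \<noteq> 0" using w' unfolding w_def I'_def by auto
    ultimately show ?thesis by blast
  qed
qed


lemma box_K2_edge_iff:
  "{p,q} \<in> snd (box_product H K2) \<longleftrightarrow>
     (fst p = fst q \<and> fst p \<in> fst H \<and> snd p \<noteq> snd q) \<or> (snd p = snd q \<and> {fst p, fst q} \<in> snd H)"
proof
  assume "{p,q} \<in> snd (box_product H K2)"
  then obtain g1 h1 g2 h2 where e: "{p,q} = {(g1,h1),(g2,h2)}" and
    c: "(g1 = g2 \<and> g1 \<in> fst H \<and> {h1, h2} \<in> snd K2) \<or> (h1 = h2 \<and> h1 \<in> fst K2 \<and> {g1, g2} \<in> snd H)"
    unfolding box_product_def by auto
  have c': "(g1 = g2 \<and> g1 \<in> fst H \<and> h1 \<noteq> h2) \<or> (h1 = h2 \<and> {g1, g2} \<in> snd H)"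
    using c unfolding K2_def by (auto simp: doubleton_eq_iff)
  from e have "(p = (g1,h1) \<and> q = (g2,h2)) \<or> (p = (g2,h2) \<and> q = (g1,h1))"
    by (auto simp: doubleton_eq_iff)
  then show "(fst p = fst q \<and> fst p \<in> fst H \<and> snd p \<noteq> snd q) \<or> (snd p = snd q \<and> {fst p, fst q} \<in> snd H)"
    using c' by (auto simp: insert_commute)
next
  assume a: "(fst p = fst q \<and> fst p \<in> fst H \<and> snd p \<noteq> snd q) \<or> (snd p = snd q \<and> {fst p, fst q} \<in> snd H)"
  obtain g1 h1 where p: "p = (g1,h1)" by (cases p)
  obtain g2 h2 where q: "q = (g2,h2)" by (cases q)
  have "{h1,h2} = {False, True}" if "h1 \<noteq> h2" using that by (cases h1; cases h2) auto
  then have "(g1 = g2 \<and> g1 \<in> fst H \<and> {h1, h2} \<in> snd K2) \<or> (h1 = h2 \<and> h1 \<in> fst K2 \<and> {g1, g2} \<in> snd H)"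
    using a unfolding p q K2_def by auto
  then show "{p,q} \<in> snd (box_product H K2)" unfolding box_product_def p q snd_conv mem_Collect_eq by blast
qed

lemma box_edge_form: "e \<in> snd (box_product H K2) \<Longrightarrow> \<exists>p q. e = {p,q}"
  unfolding box_product_def by auto

lemma fst_box: "fst (box_product H K2) = fst H \<times> UNIV"
  unfolding box_product_def K2_def by simp

lemma pm_subset_eq:
  assumes "perfect_matching \<Gamma> M" "perfect_matching \<Gamma> M'" "M \<subseteq> M'"
    and "\<forall>e\<in>snd \<Gamma>. \<exists>u\<in>e. u \<in> fst \<Gamma>"
  shows "M' = M"
proof
  show "M' \<subseteq> M"
  proof
    fix e' assume e': "e' \<in> M'"
    then have "e' \<in> snd \<Gamma>" using assms(2) unfolding perfect_matching_def by auto
    then obtain u where u: "u \<in> e'" "u \<in> fst \<Gamma>" using assms(4) by auto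
    then obtain e where e: "e \<in> M" "u \<in> e" using assms(1) unfolding perfect_matching_def by metis
    have "e \<in> M'" using e assms(3) by auto
    have "\<exists>!e. e \<in> M' \<and> u \<in> e" using assms(2) u unfolding perfect_matching_def by blast
    then have "e = e'" using \<open>e \<in> M'\<close> e e' u by metis
    then show "e' \<in> M" using e by simp
  qed
qed (use assms in auto)

lemma pm_forcing_self:
  assumes "perfect_matching \<Gamma> M" "\<forall>e\<in>snd \<Gamma>. \<exists>u\<in>e. u \<in> fst \<Gamma>"
  shows "forcing_set \<Gamma> M M"
  unfolding forcing_set_def using pm_subset_eq[OF assms(1) _ _ assms(2)] by blast

lemma sum_times_single: "sum f (A \<times> {t}) = (\<Sum>a\<in>A. f (a,t))"
  using sum.cartesian_product[of "\<lambda>a b. f (a,b)" "{t}" A] by simp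



definition "Gam G D = box_product (delete_vertices G D) K2"
definition "SA X Y D = (X - D) \<times> {False} \<union> Y \<times> {True}"
definition "SB X Y D = Y \<times> {False} \<union> (X - D) \<times> {True}"

context
  fixes G :: "'v graph" and X Y D :: "'v set"
  assumes sg: "simple_graph G" and bp: "bipartition G X Y" and DX: "D \<subseteq> X"
begin

lemma XY: "X \<inter> Y = {}" "X \<union> Y = fst G" "\<forall>e\<in>snd G. \<exists>x\<in>X. \<exists>y\<in>Y. e = {x, y}"
  using bp unfolding bipartition_def by auto

lemma finG: "finite (fst G)" using sg unfolding simple_graph_def by auto

lemma finX: "finite X" "finite Y" "finite (X - D)"
  using finG XY(2) by (auto intro: finite_subset)

lemma fstH: "fst (delete_vertices G D) = (X - D) \<union> Y"
  using XY DX unfolding delete_vertices_def by auto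

lemma edgeH: "{a,b} \<in> snd (delete_vertices G D) \<Longrightarrow> (a \<in> X - D \<and> b \<in> Y) \<or> (a \<in> Y \<and> b \<in> X - D)"
proof -
  assume a: "{a,b} \<in> snd (delete_vertices G D)"
  then have e: "{a,b} \<in> snd G" "{a,b} \<inter> D = {}" unfolding delete_vertices_def by auto
  then obtain x y where "x \<in> X" "y \<in> Y" "{a,b} = {x,y}" using XY(3) by blast
  then show ?thesis using e(2) by (auto simp: doubleton_eq_iff)
qed

lemma edgeH_iff: "x \<in> X - D \<Longrightarrow> y \<in> Y \<Longrightarrow> {x,y} \<in> snd (delete_vertices G D) \<longleftrightarrow> {x,y} \<in> snd G"
  using XY(1) DX unfolding delete_vertices_def by auto


lemma fstG: "fst (Gam G D) = ((X - D) \<union> Y) \<times> UNIV"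
  unfolding Gam_def fst_box fstH by (rule refl)

lemma finGam: "finite (fst (Gam G D))" using fstG finX by simp

lemma SAB: "(SA X Y D) \<inter> (SB X Y D) = {}" "(SA X Y D) \<subseteq> fst (Gam G D)" "(SB X Y D) \<subseteq> fst (Gam G D)"
  using XY(1) fstG unfolding SA_def SB_def by auto

lemma AB: "x \<in> SA X Y D \<Longrightarrow> x \<notin> SB X Y D"
  using SAB(1) by blast

lemma edge_cross: "e \<in> snd (Gam G D) \<Longrightarrow> \<exists>a\<in>(SA X Y D). \<exists>b\<in>(SB X Y D). e = {a,b}"
proof -
  assume e: "e \<in> snd (Gam G D)"
  then obtain p q where pq: "e = {p,q}" using box_edge_form unfolding Gam_def by blast
  obtain g1 h1 where p: "p = (g1,h1)" by (cases p)
  obtain g2 h2 where q: "q = (g2,h2)" by (cases q)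
  have c: "(g1 = g2 \<and> g1 \<in> (X - D) \<union> Y \<and> h1 \<noteq> h2) \<or> (h1 = h2 \<and> {g1, g2} \<in> snd (delete_vertices G D))"
    using e box_K2_edge_iff[of p q "delete_vertices G D"] fstH unfolding pq p q Gam_def by simp
  show ?thesis
  proof (cases "h1 = h2")
    case True
    then have "{g1, g2} \<in> snd (delete_vertices G D)" using c by auto
    then have "(g1 \<in> X - D \<and> g2 \<in> Y) \<or> (g1 \<in> Y \<and> g2 \<in> X - D)" using edgeH by blast
    then show ?thesis unfolding pq p q using True by (cases h2) (auto simp: insert_commute SA_def SB_def)
  next
    case False
    then have "g1 = g2" "g1 \<in> (X - D) \<union> Y" using c by auto
    then show ?thesis unfolding pq p q using False by (cases h1; cases h2) (auto simp: insert_commute SA_def SB_def)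
  qed
qed

lemma edge_sub: "e \<in> snd (Gam G D) \<Longrightarrow> e \<subseteq> fst (Gam G D)"
  using edge_cross SAB by blast

lemma edge_ne: "\<forall>e\<in>snd (Gam G D). \<exists>u\<in>e. u \<in> fst (Gam G D)"
  using edge_sub by (metis edge_cross insertI1 subsetD)


lemma Wedge_lemma:
  fixes Bm Cm :: "'v \<Rightarrow> 'v \<Rightarrow> 'f::field"
  assumes wB: "weighted_biadj G X Y Bm" and wC: "weighted_biadj G X Y Cm"
    and W_def: "W = (\<lambda>p q. if snd p then (if snd q then Cm (fst q) (fst p) else (if fst p = fst q then 1 else 0))
                   else (if snd q then (if fst p = fst q then 1 else 0) else Bm (fst p) (fst q)))"
    and that: "p \<in> SA X Y D" "q \<in> SB X Y D"
  shows "W p q \<noteq> 0 \<longleftrightarrow> {p,q} \<in> snd (Gam G D)"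
proof -
  obtain g1 h1 where p: "p = (g1,h1)" by (cases p)
  obtain g2 h2 where q: "q = (g2,h2)" by (cases q)
  have E: "{p,q} \<in> snd (Gam G D) \<longleftrightarrow> (g1 = g2 \<and> g1 \<in> X - D \<union> Y \<and> h1 \<noteq> h2) \<or> (h1 = h2 \<and> {g1,g2} \<in> snd (delete_vertices G D))"
    using box_K2_edge_iff[of p q "delete_vertices G D"] fstH unfolding Gam_def p q by simp
  have XYd: "g \<notin> Y" if "g \<in> X" for g using XY(1) that by blast
  from that consider (FF) "h1 = False" "h2 = False" "g1 \<in> X - D" "g2 \<in> Y"
    | (FT) "h1 = False" "h2 = True" "g1 \<in> X - D" "g2 \<in> X - D"
    | (TF) "h1 = True" "h2 = False" "g1 \<in> Y" "g2 \<in> Y"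
    | (TT) "h1 = True" "h2 = True" "g1 \<in> Y" "g2 \<in> X - D"
    unfolding SA_def SB_def p q by auto
  then show ?thesis
  proof cases
    case FF
    have "g1 \<in> X" using FF by blast
    then have "Bm g1 g2 \<noteq> 0 \<longleftrightarrow> {g1,g2} \<in> snd G" using wB FF unfolding weighted_biadj_def by blast
    then show ?thesis using E edgeH_iff[of g1 g2] FF unfolding W_def p q by simp
  next
    case FT
    then show ?thesis using E unfolding W_def p q by simp
  next
    case TF
    then show ?thesis using E unfolding W_def p q by simp
  next
    case TT
    have "g2 \<in> X" using TT by blast
    then have "Cm g2 g1 \<noteq> 0 \<longleftrightarrow> {g2,g1} \<in> snd G" using wC TT unfolding weighted_biadj_def by blast
    moreover have "g1 \<noteq> g2" using TT XYd by blast
    ultimately show ?thesis using E edgeH_iff[of g2 g1] TT unfolding W_def p q by (simp add: insert_commute)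
  qed
qed

lemma sum_SB: "(\<Sum>q\<in>SB X Y D. f q) = (\<Sum>y\<in>Y. f (y,False)) + (\<Sum>x\<in>X - D. f (x,True))"
proof -
  have "(\<Sum>q\<in>SB X Y D. f q) = sum f (Y \<times> {False}) + sum f ((X - D) \<times> {True})"
    unfolding SB_def using finX by (intro sum.union_disjoint) auto
  then show ?thesis by (simp add: sum_times_single)
qed

lemma ker_lemma:
  fixes Bm Cm :: "'v \<Rightarrow> 'v \<Rightarrow> 'f::field"
  assumes BC: "\<forall>x\<in>X. \<forall>x'\<in>X. (\<Sum>y\<in>Y. Bm x y * Cm x' y) = (if x = x' then 1 else 0)"
    and W_def: "W = (\<lambda>p q. if snd p then (if snd q then Cm (fst q) (fst p) else (if fst p = fst q then 1 else 0))
                   else (if snd q then (if fst p = fst q then 1 else 0) else Bm (fst p) (fst q)))"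
    and v_def: "v = (\<lambda>q. if snd q then w (fst q) else - (\<Sum>x\<in>X - D. Cm x (fst q) * w x))"
    and p: "p \<in> SA X Y D"
  shows "(\<Sum>q\<in>SB X Y D. W p q * v q) = 0"
proof -
  have S: "(\<Sum>q\<in>SB X Y D. W p q * v q) = (\<Sum>y\<in>Y. W p (y,False) * v (y,False)) + (\<Sum>x\<in>X - D. W p (x,True) * v (x,True))"
    by (rule sum_SB)
  obtain g h where gh: "p = (g,h)" by (cases p)
  show ?thesis
  proof (cases h)
    case False
    then have g: "g \<in> X - D" using p gh XY(1) unfolding SA_def by auto
    have 1: "(\<Sum>x\<in>X - D. W p (x,True) * v (x,True)) = w g"
    proof -
      have "(\<Sum>x\<in>X - D. W p (x,True) * v (x,True)) = (\<Sum>x\<in>X - D. if g = x then w x else 0)"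
        unfolding W_def v_def gh using False by (intro sum.cong) auto
      also have "\<dots> = w g" using g finX by simp
      finally show ?thesis .
    qed
    have "(\<Sum>y\<in>Y. W p (y,False) * v (y,False)) = - (\<Sum>y\<in>Y. Bm g y * (\<Sum>x\<in>X - D. Cm x y * w x))"
      unfolding W_def v_def gh using False by (simp add: sum_negf)
    also have "(\<Sum>y\<in>Y. Bm g y * (\<Sum>x\<in>X - D. Cm x y * w x)) = (\<Sum>x\<in>X - D. (\<Sum>y\<in>Y. Bm g y * Cm x y) * w x)"
      unfolding sum_distrib_left sum_distrib_right by (subst sum.swap) (simp add: mult.assoc)
    also have "\<dots> = (\<Sum>x\<in>X - D. if g = x then w x else 0)"
      using BC g by (intro sum.cong) auto
    also have "\<dots> = w g" using g finX by simp
    finally show ?thesis using S 1 by simp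
  next
    case True
    then have g: "g \<in> Y" using p gh XY(1) unfolding SA_def by auto
    have 1: "(\<Sum>x\<in>X - D. W p (x,True) * v (x,True)) = (\<Sum>x\<in>X - D. Cm x g * w x)"
      unfolding W_def v_def gh using True by simp
    have "(\<Sum>y\<in>Y. W p (y,False) * v (y,False)) = (\<Sum>y\<in>Y. if g = y then - (\<Sum>x\<in>X - D. Cm x y * w x) else 0)"
      unfolding W_def v_def gh using True by (intro sum.cong) auto
    also have "\<dots> = - (\<Sum>x\<in>X - D. Cm x g * w x)" using g finX by simp
    finally show ?thesis using S 1 by simp
  qed
qed


lemma lower:
  fixes Bm Cm :: "'v \<Rightarrow> 'v \<Rightarrow> 'f::field"
  assumes wB: "weighted_biadj G X Y Bm" and wC: "weighted_biadj G X Y Cm"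
    and BC: "\<forall>x\<in>X. \<forall>x'\<in>X. (\<Sum>y\<in>Y. Bm x y * Cm x' y) = (if x = x' then 1 else 0)"
    and pm: "perfect_matching (Gam G D) M" and fs: "forcing_set (Gam G D) M S"
  shows "card (X - D) \<le> card S"
proof (rule ccontr)
  assume "\<not> ?thesis"
  then have lt: "card S < card (X - D)" by simp
  have SM: "S \<subseteq> M" using fs unfolding forcing_set_def by blast
  have ME: "M \<subseteq> snd (Gam G D)" using pm unfolding perfect_matching_def by blast
  have Mu: "\<forall>u\<in>fst (Gam G D). \<exists>!e. e \<in> M \<and> u \<in> e" using pm unfolding perfect_matching_def by blast
  have "snd (Gam G D) \<subseteq> Pow (fst (Gam G D))" using edge_sub by blast
  then have finS: "finite S" using SM ME finGam by (meson finite_Pow_iff finite_subset subset_trans)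
  define J where "J = SB X Y D \<inter> \<Union>S"
  define R where "R = SA X Y D - \<Union>S"
  define Cc where "Cc = SB X Y D - \<Union>S"
  have finJ: "finite J" unfolding J_def using SAB(3) finGam finite_subset by blast
  have finC: "finite Cc" unfolding Cc_def using SAB(3) finGam finite_subset by blast
  have cardJ: "card J \<le> card S"
  proof -
    define f where "f j = (SOME e. e \<in> S \<and> j \<in> e)" for j
    have f: "f j \<in> S \<and> j \<in> f j" if "j \<in> J" for j
    proof -
      have "\<exists>e. e \<in> S \<and> j \<in> e" using that unfolding J_def by blast
      then show ?thesis unfolding f_def by (rule someI_ex)
    qed
    have "inj_on f J"
    proof (rule inj_onI)
      fix j1 j2 assume j: "j1 \<in> J" "j2 \<in> J" "f j1 = f j2"
      then have "f j1 \<in> S" using f by blast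
      then have "f j1 \<in> snd (Gam G D)" using SM ME by blast
      then obtain a b where ab: "a \<in> SA X Y D" "b \<in> SB X Y D" "f j1 = {a,b}" using edge_cross by blast
      have "j1 \<in> f j1" "j2 \<in> f j1" using f j by metis+
      moreover have "j1 \<in> SB X Y D" "j2 \<in> SB X Y D" using j unfolding J_def by blast+
      moreover have "j1 \<noteq> a" "j2 \<noteq> a" using AB ab(1) calculation(3,4) by blast+
      ultimately show "j1 = j2" using ab(3) by blast
    qed
    moreover have "f ` J \<subseteq> S" using f by blast
    ultimately show ?thesis using card_inj_on_le finS by blast
  qed
  define a :: "'v \<times> bool \<Rightarrow> 'v \<Rightarrow> 'f" where
    "a j x = (if snd j then (if x = fst j then 1 else 0) else Cm x (fst j))" for j x
  have "card J < card (X - D)" using cardJ lt by simp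
  then obtain w where w: "\<exists>x\<in>X - D. w x \<noteq> 0" "\<forall>j\<in>J. (\<Sum>x\<in>X - D. a j x * w x) = 0"
    using lin_solve[of J "X - D" a] finJ finX(3) by blast
  define v where "v = (\<lambda>q. if snd q then w (fst q) else - (\<Sum>x\<in>X - D. Cm x (fst q) * w x))"
  define W where "W = (\<lambda>p q. if snd p then (if snd q then Cm (fst q) (fst p) else (if fst p = fst q then 1 else 0))
                   else (if snd q then (if fst p = fst q then 1 else (0::'f)) else Bm (fst p) (fst q)))"
  have vJ: "v j = 0" if j: "j \<in> J" for j
  proof (cases "snd j")
    case True
    then have fj: "fst j \<in> X - D" using j XY(1) unfolding J_def SB_def by auto
    have "(\<Sum>x\<in>X - D. a j x * w x) = (\<Sum>x\<in>X - D. if x = fst j then w x else 0)"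
      unfolding a_def using True by (intro sum.cong) auto
    also have "\<dots> = w (fst j)" using fj finX by simp
    finally show ?thesis using w(2) j True unfolding v_def by simp
  next
    case False
    have "(\<Sum>x\<in>X - D. a j x * w x) = (\<Sum>x\<in>X - D. Cm x (fst j) * w x)"
      unfolding a_def using False by simp
    then show ?thesis using w(2) j False unfolding v_def by simp
  qed
  have ker: "\<forall>p\<in>R. (\<Sum>q\<in>Cc. W p q * v q) = 0"
  proof
    fix p assume "p \<in> R"
    then have pA: "p \<in> SA X Y D" unfolding R_def by blast
    have "SB X Y D = Cc \<union> J" "Cc \<inter> J = {}" unfolding Cc_def J_def by blast+
    then have "(\<Sum>q\<in>SB X Y D. W p q * v q) = (\<Sum>q\<in>Cc. W p q * v q) + (\<Sum>q\<in>J. W p q * v q)"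
      using finC finJ by (simp add: sum.union_disjoint)
    moreover have "(\<Sum>q\<in>J. W p q * v q) = 0" using vJ by simp
    moreover have "(\<Sum>q\<in>SB X Y D. W p q * v q) = 0"
      using ker_lemma[OF BC W_def v_def pA] .
    ultimately show "(\<Sum>q\<in>Cc. W p q * v q) = 0" by simp
  qed
  have nz: "\<exists>b\<in>Cc. v b \<noteq> 0"
  proof -
    obtain x where x: "x \<in> X - D" "w x \<noteq> 0" using w(1) by blast
    have b: "(x,True) \<in> SB X Y D" using x unfolding SB_def by blast
    have vb: "v (x,True) \<noteq> 0" using x unfolding v_def by simp
    then have "(x,True) \<notin> J" using vJ by blast
    then have "(x,True) \<in> Cc" using b unfolding J_def Cc_def by blast
    then show ?thesis using vb by blast
  qed
  have part: "\<forall>b\<in>Cc. \<exists>a\<in>R. {a,b} \<in> M"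
  proof
    fix b assume bC: "b \<in> Cc"
    then have bV: "b \<in> fst (Gam G D)" "b \<in> SB X Y D" "b \<notin> \<Union>S" using SAB unfolding Cc_def by blast+
    have "\<exists>!e. e \<in> M \<and> b \<in> e" using Mu bV(1) by blast
    then obtain e where e: "e \<in> M" "b \<in> e" by blast
    then have "e \<in> snd (Gam G D)" using ME by blast
    then obtain a' b' where ab: "a' \<in> SA X Y D" "b' \<in> SB X Y D" "e = {a',b'}" using edge_cross by blast
    have "b \<noteq> a'" using ab(1) bV(2) AB by blast
    then have eb: "e = {a',b}" using ab(3) e(2) by blast
    have a'V: "a' \<in> fst (Gam G D)" using ab(1) SAB(2) by blast
    have "a' \<notin> \<Union>S"
    proof
      assume "a' \<in> \<Union>S"
      then obtain e'' where e'': "e'' \<in> S" "a' \<in> e''" by blast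
      have "\<exists>!e. e \<in> M \<and> a' \<in> e" using Mu a'V by blast
      moreover have "e'' \<in> M" using e'' SM by blast
      moreover have "a' \<in> e" using eb by blast
      ultimately have "e'' = e" using e(1) e''(2) by blast
      then show False using e(2) e''(1) bV(3) by blast
    qed
    then have "a' \<in> R" using ab(1) unfolding R_def by blast
    then show "\<exists>a\<in>R. {a,b} \<in> M" using eb e(1) by blast
  qed
  have Wedge: "\<forall>p\<in>R. \<forall>q\<in>Cc. W p q \<noteq> 0 \<longleftrightarrow> {p,q} \<in> snd (Gam G D)"
    using Wedge_lemma[OF wB wC W_def] unfolding R_def Cc_def by blast
  have disj: "R \<inter> Cc = {}" using AB unfolding R_def Cc_def by blast
  have RV: "R \<subseteq> fst (Gam G D)" "Cc \<subseteq> fst (Gam G D)" using SAB unfolding R_def Cc_def by blast+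
  have Sdisj: "\<forall>e\<in>S. e \<inter> R = {}" unfolding R_def by blast
  obtain M' where "perfect_matching (Gam G D) M'" "S \<subseteq> M'" "M' \<noteq> M"
    using alt_matching[OF pm disj finC RV part Wedge ker nz SM Sdisj] by blast
  then show False using fs unfolding forcing_set_def by blast
qed


lemma upper: "\<exists>M0. perfect_matching (Gam G D) M0 \<and> forcing_number_pm (Gam G D) M0 \<le> card (X - D)"
proof -
  define vt where "vt v = {(v,False),(v,True)}" for v :: 'v
  define M0 where "M0 = vt ` (X - D \<union> Y)"
  define S0 where "S0 = vt ` (X - D)"
  have vtE: "vt v \<in> snd (Gam G D)" if "v \<in> X - D \<union> Y" for v
    using box_K2_edge_iff[of "(v,False)" "(v,True)" "delete_vertices G D"] fstH that
    unfolding Gam_def vt_def by simp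
  have vtin: "(v,t) \<in> vt v'  \<longleftrightarrow> v = v'" for v v' t unfolding vt_def by (cases t) auto
  have pm0: "perfect_matching (Gam G D) M0"
    unfolding perfect_matching_def
  proof
    show "M0 \<subseteq> snd (Gam G D)" unfolding M0_def using vtE by blast
    show "\<forall>u\<in>fst (Gam G D). \<exists>!e. e \<in> M0 \<and> u \<in> e"
    proof
      fix u assume "u \<in> fst (Gam G D)"
      then obtain v t where u: "u = (v,t)" "v \<in> X - D \<union> Y" using fstG by auto
      have "vt v \<in> M0" "u \<in> vt v" using u vtin unfolding M0_def by auto
      moreover have "e = vt v" if "e \<in> M0" "u \<in> e" for e
        using that vtin u unfolding M0_def by auto
      ultimately show "\<exists>!e. e \<in> M0 \<and> u \<in> e" by blast
    qed
  qed
  have fs0: "forcing_set (Gam G D) M0 S0"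
    unfolding forcing_set_def
  proof (intro conjI allI impI)
    show "S0 \<subseteq> M0" unfolding S0_def M0_def by blast
    fix M' assume M': "perfect_matching (Gam G D) M' \<and> S0 \<subseteq> M'"
    have M'u: "\<forall>u\<in>fst (Gam G D). \<exists>!e. e \<in> M' \<and> u \<in> e" and M'E: "M' \<subseteq> snd (Gam G D)"
      using M' unfolding perfect_matching_def by blast+
    have "vt y \<in> M'" if y: "y \<in> Y" for y
    proof -
      have yV: "(y,False) \<in> fst (Gam G D)" using fstG y by auto
      have "\<exists>!e. e \<in> M' \<and> (y,False) \<in> e" using M'u yV by blast
      then obtain e where e: "e \<in> M'" "(y,False) \<in> e" by blast
      then have "e \<in> snd (Gam G D)" using M'E by blast
      then obtain a b where ab: "a \<in> SA X Y D" "b \<in> SB X Y D" "e = {a,b}" using edge_cross by blast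
      have yB: "(y,False) \<in> SB X Y D" using y unfolding SB_def by blast
      then have "(y,False) \<noteq> a" using AB ab(1) by blast
      then have eb: "e = {a,(y,False)}" using e(2) ab(3) by blast
      obtain g h where a: "a = (g,h)" by (cases a)
      show ?thesis
      proof (cases h)
        case False
        then have g: "g \<in> X - D" using ab(1) a XY(1) unfolding SA_def by auto
        have "vt g \<in> M'" using M' g unfolding S0_def by blast
        moreover have "(g,False) \<in> vt g" "(g,False) \<in> e" using vtin eb a False by auto
        moreover have "(g,False) \<in> fst (Gam G D)" using fstG g by auto
        ultimately have "e = vt g" using M'u e(1) by blast
        then have "y = g" using e(2) vtin by blast
        then show ?thesis using g y XY(1) by blast
      next
        case True
        have "{(g,True),(y,False)} \<in> snd (Gam G D)" using \<open>e \<in> snd (Gam G D)\<close> eb a True by simp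
        then have "g = y" using box_K2_edge_iff[of "(g,True)" "(y,False)" "delete_vertices G D"]
          unfolding Gam_def by simp
        then have "e = vt y" using eb a True unfolding vt_def by auto
        then show ?thesis using e(1) by simp
      qed
    qed
    moreover have "vt x \<in> M'" if "x \<in> X - D" for x using M' that unfolding S0_def by blast
    ultimately have "M0 \<subseteq> M'" unfolding M0_def by blast
    then show "M' = M0" using pm_subset_eq[OF pm0 _ _ edge_ne] M' by blast
  qed
  have "inj_on vt (X - D)"
  proof (rule inj_onI)
    fix x y assume "vt x = vt y"
    then have "(x,False) \<in> vt y" using vtin by metis
    then show "x = y" using vtin by blast
  qed
  then have cS0: "card S0 = card (X - D)" unfolding S0_def by (simp add: card_image)
  have "forcing_number_pm (Gam G D) M0 \<le> card S0"
    unfolding forcing_number_pm_def using fs0 by (intro Least_le) blast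
  then show ?thesis using pm0 cS0 by auto
qed

lemma main:
  fixes Bm :: "'v \<Rightarrow> 'v \<Rightarrow> 'f::field"
  assumes "Bm \<in> R_F G X Y"
  shows "forcing_number (Gam G D) = card (X - D)"
proof -
  obtain Cm :: "'v \<Rightarrow> 'v \<Rightarrow> 'f" where wB: "weighted_biadj G X Y Bm" and wC: "weighted_biadj G X Y Cm"
    and BC: "\<forall>x\<in>X. \<forall>x'\<in>X. (\<Sum>y\<in>Y. Bm x y * Cm x' y) = (if x = x' then 1 else 0)"
    using assms unfolding R_F_def by blast
  have lo: "card (X - D) \<le> forcing_number_pm (Gam G D) M" if pm: "perfect_matching (Gam G D) M" for M
  proof -
    have "forcing_set (Gam G D) M M" using pm_forcing_self[OF pm edge_ne] .
    then have "\<exists>s S. forcing_set (Gam G D) M S \<and> card S = s" by blast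
    then have "\<exists>S. forcing_set (Gam G D) M S \<and> card S = forcing_number_pm (Gam G D) M"
      unfolding forcing_number_pm_def by (rule LeastI_ex)
    then obtain S where "forcing_set (Gam G D) M S" "card S = forcing_number_pm (Gam G D) M" by blast
    then show ?thesis using lower[OF wB wC BC pm] by metis
  qed
  obtain M0 where M0: "perfect_matching (Gam G D) M0" "forcing_number_pm (Gam G D) M0 \<le> card (X - D)"
    using upper by blast
  have eq: "forcing_number_pm (Gam G D) M0 = card (X - D)" using lo[OF M0(1)] M0(2) by simp
  show ?thesis unfolding forcing_number_def
  proof (rule Least_equality)
    show "\<exists>M. perfect_matching (Gam G D) M \<and> forcing_number_pm (Gam G D) M = card (X - D)"
      using M0(1) eq by blast
    fix y assume "\<exists>M. perfect_matching (Gam G D) M \<and> forcing_number_pm (Gam G D) M = y"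
    then show "card (X - D) \<le> y" using lo by blast
  qed
qed

end

theorem corollary3p3:
  fixes G :: "'v graph" and X Y D :: "'v set" and m n k :: nat
  assumes "simple_graph G"
    and "bipartition G X Y"
    and "card X = m" and "card Y = n" and "m \<le> n"
    and "(R_F G X Y :: ('v \<Rightarrow> 'v \<Rightarrow> 'f::field) set) \<noteq> {}"
    and "D \<subseteq> X" and "card D = k"
  shows "forcing_number (box_product (delete_vertices G D) K2) = m - k"
proof -
  obtain Bm :: "'v \<Rightarrow> 'v \<Rightarrow> 'f" where B: "Bm \<in> R_F G X Y" using assms(6) by blast
  have "finite X" using finX[OF assms(1,2,7)] by blast
  then have "card (X - D) = m - k" using assms(3,7,8) by (simp add: card_Diff_subset finite_subset)
  then show ?thesis using main[OF assms(1,2,7) B] unfolding Gam_def by simp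
qed

end
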